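(* (Perfect soundness of the Five Cells protocol.) Let a Five Cells puzzle on an $m\times n$ grid be given. If the prover $P$ does not know a solution of the puzzle, then in the Five Cells zero-knowledge protocol described in the context the verifier $V$ always rejects; equivalently, if $V$ accepts, then the cards printed during the protocol determine a partition of the grid into pentominoes which is a valid solution of the puzzle.
   Context: Five Cells puzzle: an $m\times n$ rectangular grid in which some cells contain a number. A solution is a partition of the grid into pentominoes (connected sets of 5 cells; a pentomino obtained from another by rotation or reflection counts as a different type, giving 63 types) such that for every numbered cell, the number equals the number of that cell's four edges which are borders of pentominoes (edges on the outer boundary of the grid count as borders). Cards: each card has either an integer or nothing (a blank card) on its front; all backs are indistinguishable. A pile-shifting shuffle applied to a matrix of face-down cards (each entry may be a stack, all stacks in a row of equal size) cyclically shifts its columns by a uniformly random amount unknown to everyone. Chosen cut protocol: given face-down cards (or equal-size stacks) $c_1,\dots,c_q$ and a secret index $i$ chosen by $P$, $P$ forms a $3\times q$ matrix with row 1 equal to $c_1,\dots,c_q$, row 2 a face-down card $1$ in column $i$ and $0$ elsewhere, row 3 a card $1$ in column 1 and $0$ elsewhere (turned face-down); a pile-shifting shuffle is applied; row 2 is revealed and the card of row 1 above the $1$ is $c_i$; after $c_i$ has been used it is put back, all face-up cards are turned face-down, another pile-shifting shuffle is applied, row 3 is revealed and the columns are cyclically shifted so that its $1$ returns to column 1. Printing protocol: given a face-down $p\times q$ template and a face-down $p\times q$ area, each template card is placed on the corresponding area card, forming $pq$ stacks of two; for each stack, $P$ uses the chosen cut protocol to select one of its two cards, the selected card is revealed, $V$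 rejects unless it is blank, and it is removed. Five Cells protocol: $P$ publicly puts a blank card on every cell, appends 4 rows and 4 columns of blank "dummy" cards below and to the right, and turns all cards face-down, giving an $(m+4)\times(n+4)$ matrix, read row by row as a sequence $a_1,a_2,\dots$. $P$ builds 63 templates, one per pentomino type: a $5\times5$ matrix with the pentomino at the top-left, each of its cells a card with the number of that cell's edges which are borders of the pentomino, all other cards blank; $V$ checks all templates. For $i=1,\dots,k$ with $k=mn/5$: (1) using the chosen cut protocol on the sequence, $P$ selects the top-left card of a $5\times5$ area (cards at positions $j+r(n+4)+c$, $0\le r,c\le4$); (2) using the chosen cut protocol, $P$ selects one template; (3) the printing protocol is applied to this template and area; (4) $P$ reconstructs a template and returns it to the pile, and $V$ checks again that the pile consists of the 63 correct templates (rejecting otherwise). Finally $P$ reveals the cards on the originally numbered cells and $V$ rejects unless they match the given numbers; $P$ reveals all dummy cards and $V$ rejects unless they are blank. Otherwise $V$ accepts. *)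

theory Defs
  imports Main "HOL-Library.Disjoint_Sets"
begin

definition grid :: "nat \<Rightarrow> nat \<Rightarrow> (int \<times> int) set" where
  "grid m n = {(i, j). 0 \<le> i \<and> i < int m \<and> 0 \<le> j \<and> j < int n}"

definition nbrs :: "int \<times> int \<Rightarrow> (int \<times> int) set" where
  "nbrs x = (case x of (i, j) \<Rightarrow> {(i + 1, j), (i - 1, j), (i, j + 1), (i, j - 1)})"

text \<open>Number of edges of cell x that are borders of the cell set S (x in S):
  an edge is a border iff the cell on the other side is not in S
  (in particular every edge on the outer boundary of the grid is a border).\<close>

definition borders :: "(int \<times> int) set \<Rightarrow> int \<times> int \<Rightarrow> nat" where
  "borders S x = card (nbrs x - S)"

definition adjrel :: "(int \<times> int) set \<Rightarrow> ((int \<times> int) \<times> (int \<times> int)) set" where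
  "adjrel S = {(a, b). a \<in> S \<and> b \<in> S \<and> b \<in> nbrs a}"

definition cell_connected :: "(int \<times> int) set \<Rightarrow> bool" where
  "cell_connected S \<longleftrightarrow> (\<forall>x\<in>S. \<forall>y\<in>S. (x, y) \<in> (adjrel S)\<^sup>*)"

definition is_pentomino :: "(int \<times> int) set \<Rightarrow> bool" where
  "is_pentomino S \<longleftrightarrow> finite S \<and> card S = 5 \<and> cell_connected S"

text \<open>A puzzle is given by its size m x n and a clue function; clue x = Some v
  means that grid cell x contains the number v (values outside the grid are ignored).\<close>

definition is_solution :: "nat \<Rightarrow> nat \<Rightarrow> (int \<times> int \<Rightarrow> int option) \<Rightarrow> (int \<times> int) set set \<Rightarrow> bool" where
  "is_solution m n clue Pt \<longleftrightarrow>
     partition_on (grid m n) Pt \<and> (\<forall>B\<in>Pt. is_pentomino B) \<and>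
     (\<forall>B\<in>Pt. \<forall>x\<in>B. \<forall>v. clue x = Some v \<longrightarrow> v = int (borders B x))"

section \<open>The protocol (abstracted: shuffles do not influence which card is selected)\<close>

text \<open>Cards: Some v is a card with integer v, None is a blank card.\<close>

type_synonym card = "int option"

text \<open>The 63 pentomino types, as shapes placed at the top-left of a 5x5 matrix.\<close>

definition pent_types :: "(int \<times> int) set set" where
  "pent_types = {S. S \<subseteq> {0..4} \<times> {0..4} \<and> is_pentomino S \<and>
                    (\<exists>c. (0, c) \<in> S) \<and> (\<exists>r. (r, 0) \<in> S)}"

definition template :: "(int \<times> int) set \<Rightarrow> int \<times> int \<Rightarrow> card" where
  "template S x = (if x \<in> S then Some (int (borders S x)) else None)"

text \<open>The (m+4) x (n+4) matrix is read row by row as a sequence with positions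
  0 ..< (m+4)(n+4); position p is row p div (n+4), column p mod (n+4).
  The chosen cut protocol acts cyclically on the sequence, so area positions
  are taken modulo the sequence length.\<close>

definition seqlen :: "nat \<Rightarrow> nat \<Rightarrow> nat" where
  "seqlen m n = (m + 4) * (n + 4)"

definition area_pos :: "nat \<Rightarrow> nat \<Rightarrow> nat \<Rightarrow> nat \<Rightarrow> nat \<Rightarrow> nat" where
  "area_pos m n j r c = (j + r * (n + 4) + c) mod seqlen m n"

definition stacks :: "(nat \<times> nat) list" where
  "stacks = [(r, c). r \<leftarrow> [0..<5], c \<leftarrow> [0..<5]]"

text \<open>One stack of the printing protocol: sel r c = True means P selects the
  template card, otherwise the area card.\<close>

definition print_stack ::
  "nat \<Rightarrow> nat \<Rightarrow> nat \<Rightarrow> (int \<times> int) set \<Rightarrow> (nat \<Rightarrow> nat \<Rightarrow> bool) \<Rightarrow> nat \<times> nat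
     \<Rightarrow> (nat \<Rightarrow> card) option \<Rightarrow> (nat \<Rightarrow> card) option" where
  "print_stack m n j S sel rc ost =
     (case ost of None \<Rightarrow> None
      | Some st \<Rightarrow>
        (case rc of (r, c) \<Rightarrow>
          (let p = area_pos m n j r c; a = st p; t = template S (int r, int c) in
           if sel r c then (if t = None then Some (st(p := a)) else None)
           else (if a = None then Some (st(p := t)) else None))))"

definition printing ::
  "nat \<Rightarrow> nat \<Rightarrow> nat \<Rightarrow> (int \<times> int) set \<Rightarrow> (nat \<Rightarrow> nat \<Rightarrow> bool)
     \<Rightarrow> (nat \<Rightarrow> card) option \<Rightarrow> (nat \<Rightarrow> card) option" where
  "printing m n j S sel ost = fold (print_stack m n j S sel) stacks ost"

text \<open>A choice of P in one iteration: the top-left position j of the area, the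
  template (pentomino type) S, and the selections in the printing protocol.
  Since V checks the template pile, S is always one of the correct templates.\<close>

type_synonym choice = "nat \<times> (int \<times> int) set \<times> (nat \<Rightarrow> nat \<Rightarrow> bool)"

definition valid_choice :: "nat \<Rightarrow> nat \<Rightarrow> choice \<Rightarrow> bool" where
  "valid_choice m n ch \<longleftrightarrow> (case ch of (j, S, sel) \<Rightarrow> j < seqlen m n \<and> S \<in> pent_types)"

definition run :: "nat \<Rightarrow> nat \<Rightarrow> choice list \<Rightarrow> (nat \<Rightarrow> card) option" where
  "run m n cs = fold (\<lambda>ch ost. case ch of (j, S, sel) \<Rightarrow> printing m n j S sel ost)
                     cs (Some (\<lambda>_. None))"

definition grid_pos :: "nat \<Rightarrow> int \<times> int \<Rightarrow> nat" where
  "grid_pos n x = (case x of (i, j) \<Rightarrow> nat i * (n + 4) + nat j)"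

definition is_dummy_pos :: "nat \<Rightarrow> nat \<Rightarrow> nat \<Rightarrow> bool" where
  "is_dummy_pos m n p \<longleftrightarrow> p < seqlen m n \<and> (m \<le> p div (n + 4) \<or> n \<le> p mod (n + 4))"

definition final_check :: "nat \<Rightarrow> nat \<Rightarrow> (int \<times> int \<Rightarrow> int option) \<Rightarrow> (nat \<Rightarrow> card) \<Rightarrow> bool" where
  "final_check m n clue st \<longleftrightarrow>
     (\<forall>x\<in>grid m n. \<forall>v. clue x = Some v \<longrightarrow> st (grid_pos n x) = Some v) \<and>
     (\<forall>p. is_dummy_pos m n p \<longrightarrow> st p = None)"

definition V_accepts :: "nat \<Rightarrow> nat \<Rightarrow> (int \<times> int \<Rightarrow> int option) \<Rightarrow> choice list \<Rightarrow> bool" where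
  "V_accepts m n clue cs \<longleftrightarrow>
     length cs = m * n div 5 \<and> (\<forall>ch\<in>set cs. valid_choice m n ch) \<and>
     (\<exists>st. run m n cs = Some st \<and> final_check m n clue st)"

end

theory Submission
  imports Defs
begin


lemma print_stack_None: "print_stack m n j S sel rc None = None"
  by (simp add: print_stack_def)

lemma fold_ps_None: "fold (print_stack m n j S sel) l None = None"
  by (induction l) (auto simp: print_stack_None)

lemma print_stack_Some:
  assumes "print_stack m n j S sel (r,c) (Some st) = Some st'"
  shows "(\<forall>p v. st p = Some v \<longrightarrow> st' p = Some v) \<and>
    ((int r, int c) \<in> S \<longrightarrow> st (area_pos m n j r c) = None \<and>
        st' (area_pos m n j r c) = Some (int (borders S (int r, int c))))"
  using assms unfolding print_stack_def Let_def template_def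
  by (auto split: if_splits)

lemma fold_ps_Some:
  "fold (print_stack m n j S sel) l (Some st) = Some st' \<Longrightarrow>
   (\<forall>p v. st p = Some v \<longrightarrow> st' p = Some v) \<and>
   (\<forall>(r,c)\<in>set l. (int r, int c) \<in> S \<longrightarrow> st (area_pos m n j r c) = None \<and>
        st' (area_pos m n j r c) = Some (int (borders S (int r, int c))))"
proof (induction l arbitrary: st)
  case Nil
  then show ?case by simp
next
  case (Cons a l)
  obtain r c where a: "a = (r,c)" by fastforce
  show ?case
  proof (cases "print_stack m n j S sel (r,c) (Some st)")
    case None
    then show ?thesis using Cons.prems a by (simp add: fold_ps_None)
  next
    case (Some st1)
    note h1 = print_stack_Some[OF Some]
    have h2: "fold (print_stack m n j S sel) l (Some st1) = Some st'" using Cons.prems a Some by simp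
    note IH = Cons.IH[OF h2]
    have A: "\<forall>p v. st p = Some v \<longrightarrow> st' p = Some v" using h1 IH by blast
    have B: "st (area_pos m n j r' c') = None \<and> st' (area_pos m n j r' c') = Some (int (borders S (int r', int c')))"
      if x: "(r',c') \<in> set (a # l)" and inS: "(int r', int c') \<in> S" for r' c'
    proof (cases "(r',c') = a")
      case True
      then show ?thesis using h1 IH a inS by auto
    next
      case False
      then have "(r',c') \<in> set l" using x by simp
      then have "st1 (area_pos m n j r' c') = None \<and> st' (area_pos m n j r' c') = Some (int (borders S (int r', int c')))"
        using IH inS by auto
      moreover have "st1 (area_pos m n j r' c') = None \<Longrightarrow> st (area_pos m n j r' c') = None"
        using h1 by (metis option.exhaust)
      ultimately show ?thesis by auto
    qed
    show ?thesis using A B by fastforce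
  qed
qed

lemma set_stacks: "set stacks = {0..<5} \<times> {0..<5}"
  by (auto simp: stacks_def)

lemma printing_Some:
  assumes "printing m n j S sel (Some st) = Some st'" and "S \<subseteq> {0..4} \<times> {0..4}"
  shows "(\<forall>p v. st p = Some v \<longrightarrow> st' p = Some v) \<and>
   (\<forall>y\<in>S. st (area_pos m n j (nat (fst y)) (nat (snd y))) = None \<and>
        st' (area_pos m n j (nat (fst y)) (nat (snd y))) = Some (int (borders S y)))"
proof -
  note h = fold_ps_Some[OF assms(1)[unfolded printing_def]]
  have B: "st (area_pos m n j (nat (fst y)) (nat (snd y))) = None \<and>
        st' (area_pos m n j (nat (fst y)) (nat (snd y))) = Some (int (borders S y))" if y: "y \<in> S" for y
  proof -
    obtain a b where ye: "y = (a,b)" by fastforce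
    have ab: "0 \<le> a" "a \<le> 4" "0 \<le> b" "b \<le> 4" using y ye assms(2) by auto
    have "(nat a, nat b) \<in> set stacks" using ab by (auto simp: set_stacks)
    moreover have "(int (nat a), int (nat b)) = y" using ab ye by simp
    ultimately show ?thesis
      using h y ye by fastforce
  qed
  show ?thesis using h B by blast
qed

lemma printing_None: "printing m n j S sel None = None"
  by (simp add: printing_def fold_ps_None)



lemma ap_eq:
  assumes "j mod (n+4) + c < n + 4" "j div (n+4) + r < m + 4"
  shows "area_pos m n j r c = (j div (n+4) + r) * (n+4) + (j mod (n+4) + c)"
    and "area_pos m n j r c div (n+4) = j div (n+4) + r"
    and "area_pos m n j r c mod (n+4) = j mod (n+4) + c"
proof -
  let ?w = "n+4"
  have d: "j div ?w * ?w + j mod ?w = j" by (rule div_mult_mod_eq)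
  have e: "j + r * ?w + c = (j div ?w + r) * ?w + (j mod ?w + c)"
    using d by (simp only: distrib_right)
  have "(j div ?w + r) * ?w + (j mod ?w + c) < (m+4) * ?w"
  proof -
    have "(j div ?w + r) * ?w + (j mod ?w + c) < (j div ?w + r) * ?w + ?w" using assms(1) by simp
    also have "\<dots> = (j div ?w + r + 1) * ?w" by simp
    also have "\<dots> \<le> (m+4) * ?w" using assms(2) by (intro mult_right_mono) auto
    finally show ?thesis .
  qed
  then show 1: "area_pos m n j r c = (j div (n+4) + r) * (n+4) + (j mod (n+4) + c)"
    unfolding area_pos_def seqlen_def e by simp
  show "area_pos m n j r c div (n+4) = j div (n+4) + r" unfolding 1 using assms(1) by simp
  show "area_pos m n j r c mod (n+4) = j mod (n+4) + c" unfolding 1 using assms(1) by simp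
qed

lemma ap_lt: "area_pos m n j r c < seqlen m n"
  unfolding area_pos_def seqlen_def by simp

definition tr :: "int \<times> int \<Rightarrow> int \<times> int \<Rightarrow> int \<times> int" where
  "tr d y = (fst y + fst d, snd y + snd d)"

lemma geom:
  assumes S: "S \<in> pent_types" and j: "j < seqlen m n"
    and nd: "\<forall>y\<in>S. \<not> is_dummy_pos m n (area_pos m n j (nat (fst y)) (nat (snd y)))"
    and y: "y \<in> S"
  shows "tr (int (j div (n+4)), int (j mod (n+4))) y \<in> grid m n \<and>
         grid_pos n (tr (int (j div (n+4)), int (j mod (n+4))) y) = area_pos m n j (nat (fst y)) (nat (snd y))"
proof -
  let ?w = "n+4"
  have Ssub: "S \<subseteq> {0..4} \<times> {0..4}" and c0: "\<exists>c. (0, c) \<in> S" and r0: "\<exists>r. (r, 0) \<in> S"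
    using S by (auto simp: pent_types_def)
  have nd': "area_pos m n j (nat (fst y)) (nat (snd y)) div ?w < m \<and> area_pos m n j (nat (fst y)) (nat (snd y)) mod ?w < n"
    if "y \<in> S" for y
    using nd that ap_lt[of m n j] unfolding is_dummy_pos_def by auto
  have jr: "j div ?w < m + 4" using j unfolding seqlen_def
    by (simp add: div_less_iff_less_mult)
  obtain r where r: "(r,0) \<in> S" using r0 by auto
  have "area_pos m n j (nat r) 0 mod ?w = j mod ?w"
    unfolding area_pos_def seqlen_def
    by (simp add: mod_mod_cancel)
  then have jc: "j mod ?w < n" using nd'[OF r] by simp
  obtain c where c: "(0,c) \<in> S" using c0 by auto
  have c4: "c \<le> 4" "0 \<le> c" using c Ssub by auto
  have "area_pos m n j 0 (nat c) div ?w = j div ?w"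
    using ap_eq(2)[where r=0 and c="nat c" and m=m and n=n and j=j] jc jr c4 by simp
  then have jr2: "j div ?w < m" using nd'[OF c] by simp
  obtain a b where ye: "y = (a,b)" by fastforce
  have ab: "0 \<le> a" "a \<le> 4" "0 \<le> b" "b \<le> 4" using y ye Ssub by auto
  have c1: "j mod (n+4) + nat b < n + 4" "j div (n+4) + nat a < m + 4" using ab jc jr2 by auto
  note E = ap_eq[OF c1]
  have lt: "j div (n+4) + nat a < m" "j mod (n+4) + nat b < n" using nd'[OF y] E ye by auto
  show ?thesis using lt ab E ye unfolding tr_def grid_def grid_pos_def
    by (auto simp: nat_add_distrib)
qed



lemma inj_tr: "inj (tr d)"
  by (auto simp: inj_def tr_def prod_eq_iff)

lemma inj_on_tr[simp]: "inj_on (tr d) A"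
  using inj_tr[of d] by (rule inj_on_subset) simp

lemma nbrs_tr: "nbrs (tr d y) = tr d ` nbrs y"
  by (cases y; cases d) (auto simp: nbrs_def tr_def image_def)

lemma borders_tr: "borders (tr d ` S) (tr d y) = borders S y"
proof -
  have "nbrs (tr d y) - tr d ` S = tr d ` (nbrs y - S)"
    using inj_tr[of d] by (simp add: nbrs_tr image_set_diff)
  then show ?thesis unfolding borders_def
    by (simp add: card_image)
qed

lemma adj_tr: "(x, y) \<in> adjrel S \<Longrightarrow> (tr d x, tr d y) \<in> adjrel (tr d ` S)"
  by (auto simp: adjrel_def nbrs_tr)

lemma rtr_tr: "(x, y) \<in> (adjrel S)\<^sup>* \<Longrightarrow> (tr d x, tr d y) \<in> (adjrel (tr d ` S))\<^sup>*"
proof (induction rule: rtrancl_induct)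
  case base
  then show ?case by simp
next
  case (step y z)
  then show ?case using adj_tr by (meson rtrancl.rtrancl_into_rtrancl)
qed

lemma pent_tr: "is_pentomino S \<Longrightarrow> is_pentomino (tr d ` S)"
  unfolding is_pentomino_def cell_connected_def
  by (auto simp: card_image rtr_tr)

lemma card_grid: "card (grid m n) = m * n"
proof -
  have "grid m n = {0..<int m} \<times> {0..<int n}" by (auto simp: grid_def)
  then show ?thesis by (simp add: card_cartesian_product)
qed

lemma finite_grid: "finite (grid m n)"
proof -
  have "grid m n = {0..<int m} \<times> {0..<int n}" by (auto simp: grid_def)
  then show ?thesis by simp
qed



theorem lemma2:
  fixes m n :: nat and clue :: "int \<times> int \<Rightarrow> int option" and cs :: "choice list"
  assumes "5 dvd m * n"
    and "V_accepts m n clue cs"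
  shows "\<exists>Pt st. is_solution m n clue Pt \<and> run m n cs = Some st \<and>
           (\<forall>B\<in>Pt. \<forall>x\<in>B. st (grid_pos n x) = Some (int (borders B x)))"
proof -
  define k where "k = length cs"
  obtain fin where len: "k = m * n div 5" and valid: "\<forall>ch\<in>set cs. valid_choice m n ch"
    and runfin: "run m n cs = Some fin" and fc: "final_check m n clue fin"
    using assms(2) unfolding V_accepts_def k_def by blast
  define F where "F = (\<lambda>(ch::choice) ost. case ch of (j, S, sel) \<Rightarrow> printing m n j S sel ost)"
  define ST where "ST i = fold F (take i cs) (Some (\<lambda>_. None))" for i
  have FN: "F ch None = None" for ch
    unfolding F_def by (cases ch) (auto simp: printing_None)
  have foldN: "fold F l None = None" for l
    by (induction l) (auto simp: FN)
  have ST_Suc: "ST (Suc i) = F (cs!i) (ST i)" if "i < k" for i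
    using that unfolding ST_def k_def by (simp add: take_Suc_conv_app_nth)
  have runST: "run m n cs = fold F (drop i cs) (ST i)" for i
  proof -
    have "run m n cs = fold F cs (Some (\<lambda>_. None))" unfolding run_def F_def by simp
    also have "\<dots> = fold F (take i cs @ drop i cs) (Some (\<lambda>_. None))" by simp
    also have "\<dots> = fold F (drop i cs) (ST i)" unfolding ST_def by (simp only: fold_append comp_def)
    finally show ?thesis .
  qed
  have STk: "ST k = Some fin" using runST[of k] runfin by (simp add: k_def)
  have STsome: "ST i \<noteq> None" for i
  proof
    assume "ST i = None"
    then have "run m n cs = None" using runST[of i] foldN by simp
    then show False using runfin by simp
  qed
  define stt where "stt i = the (ST i)" for i
  have ST_eq: "ST i = Some (stt i)" for i using STsome[of i] by (auto simp: stt_def)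
  have fin_eq: "stt k = fin" using STk ST_eq[of k] by simp
  define J where "J i = fst (cs!i)" for i
  define SS where "SS i = fst (snd (cs!i))" for i
  define SEL where "SEL i = snd (snd (cs!i))" for i
  have csi: "cs!i = (J i, SS i, SEL i)" for i by (simp add: J_def SS_def SEL_def)
  have vi: "J i < seqlen m n \<and> SS i \<in> pent_types" if "i < k" for i
    using valid that csi[of i] unfolding k_def valid_choice_def
    by (metis (no_types, lifting) case_prod_conv nth_mem)
  have step: "printing m n (J i) (SS i) (SEL i) (Some (stt i)) = Some (stt (Suc i))" if "i < k" for i
    using ST_Suc[OF that] ST_eq[of i] ST_eq[of "Suc i"] csi[of i] unfolding F_def by simp
  have Ssub: "SS i \<subseteq> {0..4} \<times> {0..4}" if "i < k" for i
    using vi[OF that] by (simp add: pent_types_def)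
  define P where "P i y = area_pos m n (J i) (nat (fst y)) (nat (snd y))" for i y
  have PS: "(\<forall>p v. stt i p = Some v \<longrightarrow> stt (Suc i) p = Some v) \<and>
     (\<forall>y\<in>SS i. stt i (P i y) = None \<and> stt (Suc i) (P i y) = Some (int (borders (SS i) y)))"
    if "i < k" for i
    using printing_Some[OF step[OF that] Ssub[OF that]] unfolding P_def by blast
  have mono: "stt i p = Some v \<Longrightarrow> stt i' p = Some v" if "i \<le> i'" "i' \<le> k" for i i' p v
    using that
  proof (induction i' rule: dec_induct)
    case base
    then show ?case by simp
  next
    case (step i')
    then show ?case using PS[of i'] by auto
  qed
  define off where "off i = (int (J i div (n+4)), int (J i mod (n+4)))" for i
  define B where "B i = tr (off i) ` SS i" for i
  have K3: "fin (P i y) = Some (int (borders (SS i) y))" if "i < k" "y \<in> SS i" for i y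
    using mono[of "Suc i" k] PS[OF that(1)] that fin_eq by auto
  have K4: "\<forall>y\<in>SS i. \<not> is_dummy_pos m n (P i y)" if "i < k" for i
    using K3[OF that] fc unfolding final_check_def by fastforce
  have K5: "tr (off i) y \<in> grid m n \<and> grid_pos n (tr (off i) y) = P i y" if "i < k" "y \<in> SS i" for i y
    using geom[of "SS i" "J i" m n y] vi[OF that(1)] K4[OF that(1)] that(2)
    unfolding off_def P_def by blast
  have Bgrid: "B i \<subseteq> grid m n" if "i < k" for i
    using K5[OF that] unfolding B_def by auto
  have Bpent: "is_pentomino (B i)" if "i < k" for i
    using vi[OF that] pent_tr unfolding B_def pent_types_def by auto
  have Bcard: "card (B i) = 5" if "i < k" for i
    using Bpent[OF that] unfolding is_pentomino_def by simp
  have disj_lt: "B i \<inter> B i' = {}" if "i < i'" "i' < k" for i i'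
  proof (rule ccontr)
    assume "B i \<inter> B i' \<noteq> {}"
    then obtain y y' where y: "y \<in> SS i" and y': "y' \<in> SS i'" and eq: "tr (off i) y = tr (off i') y'"
      unfolding B_def by blast
    have ik: "i < k" using that by simp
    have "P i y = P i' y'" using K5[OF ik y] K5[OF that(2) y'] eq by simp
    moreover have "stt (Suc i) (P i y) = Some (int (borders (SS i) y))" using PS[OF ik] y by blast
    then have "stt i' (P i y) = Some (int (borders (SS i) y))"
      using mono[of "Suc i" i'] that by simp
    moreover have "stt i' (P i' y') = None" using PS[OF that(2)] y' by blast
    ultimately show False by simp
  qed
  have disj: "B i \<inter> B i' = {}" if "i \<noteq> i'" "i < k" "i' < k" for i i'
    using that disj_lt[of i i'] disj_lt[of i' i] by (cases "i < i'") (auto simp: Int_commute)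
  have cardU: "card (\<Union>i<k. B i) = m * n"
  proof -
    have "card (\<Union>i<k. B i) = (\<Sum>i<k. card (B i))"
    proof (rule card_UN_disjoint)
      show "finite {..<k}" by simp
      show "\<forall>i\<in>{..<k}. finite (B i)" using Bpent unfolding is_pentomino_def by auto
      show "\<forall>i\<in>{..<k}. \<forall>j\<in>{..<k}. i \<noteq> j \<longrightarrow> B i \<inter> B j = {}" using disj by auto
    qed
    also have "\<dots> = 5 * k" using Bcard by simp
    also have "\<dots> = m * n" using len assms(1) by simp
    finally show ?thesis .
  qed
  have Ueq: "(\<Union>i<k. B i) = grid m n"
  proof (rule card_subset_eq[OF finite_grid])
    show "(\<Union>i<k. B i) \<subseteq> grid m n" using Bgrid by auto
    show "card (\<Union>i<k. B i) = card (grid m n)" using cardU card_grid[of m n] by simp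
  qed
  define Pt where "Pt = B ` {..<k}"
  have part: "partition_on (grid m n) Pt"
  proof (rule partition_onI)
    show "\<Union>Pt = grid m n" using Ueq unfolding Pt_def by simp
    show "disjnt p q" if hp: "p \<in> Pt" and hq: "q \<in> Pt" and hne: "p \<noteq> q" for p q
    proof -
      obtain i i' where "i < k" "i' < k" "p = B i" "q = B i'" using hp hq unfolding Pt_def by auto
      then show ?thesis using disj[of i i'] hne unfolding disjnt_def by blast
    qed
    show "{} \<notin> Pt" using Bcard unfolding Pt_def by fastforce
  qed
  have val: "fin (grid_pos n x) = Some (int (borders (B i) x))" if hi: "i < k" and hx: "x \<in> B i" for i x
  proof -
    obtain y where y: "y \<in> SS i" and x: "x = tr (off i) y" using hx unfolding B_def by auto
    have "fin (grid_pos n x) = Some (int (borders (SS i) y))" using K5[OF hi y] K3[OF hi y] x by simp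
    also have "borders (SS i) y = borders (B i) x" unfolding B_def x by (simp add: borders_tr)
    finally show ?thesis .
  qed
  have sol: "is_solution m n clue Pt"
    unfolding is_solution_def
  proof (intro conjI part ballI allI impI)
    fix Bx assume "Bx \<in> Pt" then show "is_pentomino Bx" using Bpent unfolding Pt_def by auto
  next
    fix Bx x v assume Bx: "Bx \<in> Pt" and x: "x \<in> Bx" and cl: "clue x = Some v"
    obtain i where i: "i < k" and Bi: "Bx = B i" using Bx unfolding Pt_def by auto
    have "x \<in> grid m n" using Bgrid[OF i] x Bi by auto
    then have "fin (grid_pos n x) = Some v" using fc cl unfolding final_check_def by blast
    then show "v = int (borders Bx x)" using val[OF i] x Bi by simp
  qed
  show ?thesis
    using sol runfin val unfolding Pt_def by blast
qed

end
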